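(* For every integer $n>1$ and every integer $k$ with $1\le k\le 2n$, $c_{2k,n}=2^{k+1}-1$.
   Context: Fix $n>1$. Let $Q_n=\{(1,n+1)\}\cup\{(m,2n+2-m):2\le m\le n\}\cup\{(m,2n+1-m):n+1\le m\le 2n\}$. For integers $1\le i,j\le 2n$ and $k\ge1$ define $b_{k,i,j,n}$ recursively by $b_{1,i,j,n}=1$ if $(i,j)\in Q_n$ and $0$ otherwise, and $b_{k+1,i,j,n}=b_{k,i,2n+1-j,n}+b_{k,i,n+1,n}$ if $1\le j\le n-1$; $b_{k+1,i,n,n}=b_{k,i,n,n}+b_{k,i,n+1,n}$; $b_{k+1,i,n+1,n}=b_{k,i,1,n}$; $b_{k+1,i,j,n}=b_{k,i,2n+2-j,n}$ if $n+2\le j\le 2n$. Define $c_{k,n}=\sum_{i=1}^{2n}b_{k,i,i,n}+b_{k,n+1,n,n}+\sum_{i=n+2}^{2n}b_{k,i,n+1,n}$. *)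

theory Defs
  imports Main
begin

definition Q :: "nat \<Rightarrow> (nat \<times> nat) set" where
  "Q n = {(1, n + 1)} \<union> {(m, 2*n + 2 - m) | m. 2 \<le> m \<and> m \<le> n}
         \<union> {(m, 2*n + 1 - m) | m. n + 1 \<le> m \<and> m \<le> 2*n}"

text \<open>b k i j n is the paper's b_{k,i,j,n} for k \<ge> 1 (the value at k = 0 is an unused dummy).\<close>
fun b :: "nat \<Rightarrow> nat \<Rightarrow> nat \<Rightarrow> nat \<Rightarrow> nat" where
  "b 0 i j n = 0"
| "b (Suc 0) i j n = (if (i, j) \<in> Q n then 1 else 0)"
| "b (Suc (Suc k)) i j n =
     (if 1 \<le> j \<and> j \<le> n - 1 then b (Suc k) i (2*n + 1 - j) n + b (Suc k) i (n + 1) n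
      else if j = n then b (Suc k) i n n + b (Suc k) i (n + 1) n
      else if j = n + 1 then b (Suc k) i 1 n
      else if n + 2 \<le> j \<and> j \<le> 2*n then b (Suc k) i (2*n + 2 - j) n
      else 0)"

definition c :: "nat \<Rightarrow> nat \<Rightarrow> nat" where
  "c k n = (\<Sum>i = 1..2*n. b k i i n) + b k (n + 1) n n + (\<Sum>i = n + 2..2*n. b k i (n + 1) n)"

end

theory Submission
  imports Defs
begin

definition A :: "nat \<Rightarrow> nat \<Rightarrow> nat \<Rightarrow> nat" where
"A n u s = (if 1 \<le> u \<and> u \<le> n - 1 then (if s = 2*n+1-u then 1 else 0) + (if s = n+1 then 1 else 0)
  else if u = n then (if s = n then 1 else 0) + (if s = n+1 then 1 else 0)
  else if u = n+1 then (if s = 1 then 1 else 0)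
  else if n+2 \<le> u \<and> u \<le> 2*n then (if s = 2*n+2-u then 1 else 0) else 0)"

fun W :: "nat \<Rightarrow> nat \<Rightarrow> nat \<Rightarrow> nat \<Rightarrow> nat" where
"W n 0 u v = (if u = v then 1 else 0)"
| "W n (Suc m) u v = (\<Sum>s=1..2*n. A n u s * W n m s v)"

declare W.simps(2)[simp del]

lemma A_range: "n > 1 \<Longrightarrow> A n u s \<noteq> 0 \<Longrightarrow> u \<in> {1..2*n} \<and> s \<in> {1..2*n}"
  unfolding A_def by (auto split: if_splits)

lemma delta_sum: "a \<in> S \<Longrightarrow> finite S \<Longrightarrow> (\<Sum>s\<in>S. (if s = a then 1 else 0) * (f s :: nat)) = f a"
  by (simp add: if_distrib[where f="\<lambda>x. x * _"] cong: if_cong)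

lemma delta_sum2: "a \<in> S \<Longrightarrow> a2 \<in> S \<Longrightarrow> finite S \<Longrightarrow>
   (\<Sum>s\<in>S. ((if s = a then 1 else 0) + (if s = a2 then 1 else 0)) * (f s :: nat)) = f a + f a2"
  by (simp add: distrib_right sum.distrib delta_sum)

lemma fs: assumes "n > 1" shows "W n (Suc m) u v =
  (if 1 \<le> u \<and> u \<le> n - 1 then W n m (2*n+1-u) v + W n m (n+1) v
   else if u = n then W n m n v + W n m (n+1) v
   else if u = n+1 then W n m 1 v
   else if n+2 \<le> u \<and> u \<le> 2*n then W n m (2*n+2-u) v else 0)"
proof -
  have e: "W n (Suc m) u v = (\<Sum>s\<in>{1..2*n}. A n u s * W n m s v)" by (simp add: W.simps(2))
  show ?thesis
  proof (cases "1 \<le> u \<and> u \<le> n - 1")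
    case True
    hence a: "A n u s = (if s = 2*n+1-u then 1 else 0) + (if s = n+1 then 1 else 0)" for s by (simp add: A_def)
    show ?thesis unfolding e a using assms True by (subst delta_sum2) auto
  next
    case F1: False
    show ?thesis
    proof (cases "u = n")
      case True
      hence a: "A n u s = (if s = n then 1 else 0) + (if s = n+1 then 1 else 0)" for s using F1 by (simp add: A_def)
      show ?thesis unfolding e a using assms F1 True by (subst delta_sum2) auto
    next
      case F2: False
      show ?thesis
      proof (cases "u = n+1")
        case True
        hence a: "A n u s = (if s = 1 then 1 else 0)" for s using F1 F2 by (simp add: A_def)
        show ?thesis unfolding e a using assms F1 F2 True by (subst delta_sum) auto
      next
        case F3: False
        show ?thesis
        proof (cases "n+2 \<le> u \<and> u \<le> 2*n")
          case True
          hence a: "A n u s = (if s = 2*n+2-u then 1 else 0)" for s using F1 F2 F3 by (simp add: A_def)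
          show ?thesis unfolding e a using assms F1 F2 F3 True by (subst delta_sum) auto
        next
          case False
          hence a: "A n u s = 0" for s using F1 F2 F3 by (simp add: A_def)
          show ?thesis unfolding e a using assms F1 F2 F3 False by auto
        qed
      qed
    qed
  qed
qed

lemma delta_r: "finite S \<Longrightarrow> (\<Sum>s\<in>S. (g s::nat) * (if s = v then 1 else 0)) = (if v \<in> S then g v else 0)"
  by (simp add: if_distrib[where f="\<lambda>x. _ * x"] cong: if_cong)
lemma delta_l: "finite S \<Longrightarrow> (\<Sum>s\<in>S. (if u = s then 1 else 0) * (g s::nat)) = (if u \<in> S then g u else 0)"
  by (simp add: if_distrib[where f="\<lambda>x. x * _"] cong: if_cong)

lemma ls: assumes "n > 1" shows "W n (Suc m) u v = (\<Sum>s=1..2*n. W n m u s * A n s v)"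
proof (induction m arbitrary: u v)
  case 0
  have "W n (Suc 0) u v = (\<Sum>s=1..2*n. A n u s * (if s = v then 1 else 0))" by (simp add: W.simps(2))
  also have "\<dots> = A n u v" using A_range[OF assms, of u v] by (subst delta_r) auto
  also have "\<dots> = (\<Sum>s=1..2*n. (if u = s then 1 else 0) * A n s v)" using A_range[OF assms, of u v] by (subst delta_l) auto
  finally show ?case by simp
next
  case (Suc m)
  have "W n (Suc (Suc m)) u v = (\<Sum>s=1..2*n. A n u s * W n (Suc m) s v)" by (simp add: W.simps(2))
  also have "\<dots> = (\<Sum>s=1..2*n. \<Sum>p=1..2*n. A n u s * (W n m s p * A n p v))" using Suc by (simp add: sum_distrib_left)
  also have "\<dots> = (\<Sum>p=1..2*n. \<Sum>s=1..2*n. A n u s * (W n m s p * A n p v))" by (rule sum.swap)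
  also have "\<dots> = (\<Sum>p=1..2*n. (\<Sum>s=1..2*n. A n u s * W n m s p) * A n p v)" by (simp add: sum_distrib_right mult.assoc)
  also have "\<dots> = (\<Sum>p=1..2*n. W n (Suc m) u p * A n p v)" by (simp add: W.simps(2))
  finally show ?case .
qed

lemma ls_single: assumes "n > 1" and "a \<in> {1..2*n}" and "\<And>s. s \<in> {1..2*n} \<Longrightarrow> A n s v = (if s = a then 1 else 0)"
  shows "W n (Suc m) u v = W n m u a"
proof -
  have "W n (Suc m) u v = (\<Sum>s=1..2*n. W n m u s * (if s = a then 1 else 0))"
    unfolding ls[OF assms(1)] using assms(3) by (intro sum.cong) auto
  also have "\<dots> = W n m u a" using assms(2) by (subst delta_r) auto
  finally show ?thesis .
qed

lemma ls_x1: "n > 1 \<Longrightarrow> W n (Suc m) u 1 = W n m u (n+1)"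
  by (rule ls_single) (auto simp: A_def)

lemma ls_x: "n > 1 \<Longrightarrow> 2 \<le> v \<Longrightarrow> v \<le> n - 1 \<Longrightarrow> W n (Suc m) u v = W n m u (2*n+2-v)"
  by (rule ls_single) (auto simp: A_def)

lemma ls_y: "n > 1 \<Longrightarrow> n+2 \<le> v \<Longrightarrow> v \<le> 2*n \<Longrightarrow> W n (Suc m) u v = W n m u (2*n+1-v)"
  by (rule ls_single) (auto simp: A_def)

lemma ls_n: assumes "n > 1" shows "W n (Suc m) u n = W n m u (n+2) + W n m u n"
proof -
  have "W n (Suc m) u n = (\<Sum>s=1..2*n. ((if s = n+2 then 1 else 0) + (if s = n then 1 else 0)) * W n m u s)"
    unfolding ls[OF assms(1)] using assms by (intro sum.cong) (auto simp: A_def)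
  also have "\<dots> = W n m u (n+2) + W n m u n" using assms by (subst delta_sum2) auto
  finally show ?thesis .
qed

definition qf :: "nat \<Rightarrow> nat \<Rightarrow> nat" where
"qf n i = (if i = 1 then n+1 else if i \<le> n then 2*n+2-i else 2*n+1-i)"

lemma Q_char: "n > 1 \<Longrightarrow> (i, j) \<in> Q n \<longleftrightarrow> (1 \<le> i \<and> i \<le> 2*n \<and> j = qf n i)"
  unfolding Q_def qf_def by auto

lemma b_W: assumes "n > 1" "1 \<le> i" "i \<le> 2*n" shows "b (Suc m) i j n = W n m j (qf n i)"
proof (induction m arbitrary: j)
  case 0
  then show ?case using Q_char[OF assms(1), of i j] assms by auto
next
  case (Suc m)
  show ?case by (simp only: b.simps Suc fs[OF assms(1)])
qed

lemma rev_sum: "(n::nat) > 1 \<Longrightarrow> (\<Sum>u=n+2..2*n. f u) = (\<Sum>j=1..n-1. f (2*n+1-j))"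
  by (rule sum.reindex_bij_witness[of _ "\<lambda>u. 2*n+1-u" "\<lambda>u. 2*n+1-u"]) auto

lemma split_sum: assumes "(n::nat) > 1" shows
  "(\<Sum>u=1..2*n. f u) = (\<Sum>j=1..n-1. f j) + f n + f (n+1) + (\<Sum>j=1..n-1. f (2*n+1-j))"
proof -
  have e: "{1..2*n} = {1..n-1} \<union> ({n, n+1} \<union> {n+2..2*n})" using assms by auto
  have "(\<Sum>u=1..2*n. f u) = (\<Sum>j=1..n-1. f j) + (\<Sum>u\<in>{n, n+1} \<union> {n+2..2*n}. f u)"
    unfolding e using assms by (subst sum.union_disjoint) auto
  also have "(\<Sum>u\<in>{n, n+1} \<union> {n+2..2*n}. f u) = f n + f (n+1) + (\<Sum>u=n+2..2*n. f u)"
    by (subst sum.union_disjoint) auto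
  finally show ?thesis using rev_sum[OF assms, of f] by (simp add: add.assoc)
qed

lemma shift_sum: assumes "(n::nat) > 1" shows "(\<Sum>j=1..n. g j) = g 1 + (\<Sum>j=1..n-1. g (j+1))"
proof -
  have "(\<Sum>j=1..n. g j) = g 1 + (\<Sum>j=2..n. g j)" using assms
    by (metis One_nat_def Suc_1 less_imp_le_nat one_le_numeral sum.atLeast_Suc_atMost order_trans)
  also have "(\<Sum>j=2..n. g j) = (\<Sum>j=1..n-1. g (j+1))"
    by (rule sum.reindex_bij_witness[of _ "\<lambda>j. j+1" "\<lambda>j. j-1"]) auto
  finally show ?thesis .
qed

lemma c_W: assumes "n > 1" shows "c (Suc m) n = (\<Sum>u=1..2*n. W n (Suc m) u u)"
proof -
  have b1: "(\<Sum>i=1..2*n. b (Suc m) i i n) = (\<Sum>i=1..2*n. W n m i (qf n i))"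
    using assms by (intro sum.cong) (auto simp: b_W)
  have b2: "b (Suc m) (n+1) n n = W n m n n" using assms by (simp add: b_W qf_def)
  have b3: "(\<Sum>i=n+2..2*n. b (Suc m) i (n+1) n) = (\<Sum>j=1..n-1. W n m (n+1) j)"
  proof -
    have "(\<Sum>i=n+2..2*n. b (Suc m) i (n+1) n) = (\<Sum>i=n+2..2*n. W n m (n+1) (2*n+1-i))"
      using assms by (intro sum.cong) (auto simp: b_W qf_def)
    also have "\<dots> = (\<Sum>j=1..n-1. W n m (n+1) j)" using assms by (subst rev_sum) (auto intro!: sum.cong)
    finally show ?thesis .
  qed
  let ?g = "\<lambda>j. W n m j (qf n j)"
  have L: "(\<Sum>i=1..2*n. W n m i (qf n i)) = (\<Sum>j=1..n. ?g j) + W n m (n+1) n + (\<Sum>j=1..n-1. W n m (2*n+1-j) j)"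
  proof -
    have "(\<Sum>i=1..2*n. W n m i (qf n i)) = (\<Sum>j=1..n-1. ?g j) + ?g n + ?g (n+1) + (\<Sum>j=1..n-1. ?g (2*n+1-j))"
      using split_sum[OF assms] .
    moreover have "(\<Sum>j=1..n-1. ?g j) + ?g n = (\<Sum>j=1..n. ?g j)" using assms
      by (cases n) (auto simp: sum.cl_ivl_Suc)
    moreover have "?g (n+1) = W n m (n+1) n" using assms by (simp add: qf_def)
    moreover have "(\<Sum>j=1..n-1. ?g (2*n+1-j)) = (\<Sum>j=1..n-1. W n m (2*n+1-j) j)"
      using assms by (intro sum.cong) (auto simp: qf_def)
    ultimately show ?thesis by simp
  qed
  have G: "(\<Sum>j=1..n. ?g j) = W n m 1 (n+1) + (\<Sum>j=1..n-1. W n m (j+1) (2*n+1-j))"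
    using assms by (subst shift_sum[OF assms]) (auto simp: qf_def intro!: sum.cong)
  have R: "(\<Sum>u=1..2*n. W n (Suc m) u u) = (\<Sum>j=1..n-1. W n m (2*n+1-j) j + W n m (n+1) j)
     + (W n m n n + W n m (n+1) n) + W n m 1 (n+1) + (\<Sum>j=1..n-1. W n m (j+1) (2*n+1-j))"
  proof -
    have "(\<Sum>u=1..2*n. W n (Suc m) u u) = (\<Sum>j=1..n-1. W n (Suc m) j j) + W n (Suc m) n n + W n (Suc m) (n+1) (n+1)
        + (\<Sum>j=1..n-1. W n (Suc m) (2*n+1-j) (2*n+1-j))" by (rule split_sum[OF assms])
    moreover have "(\<Sum>j=1..n-1. W n (Suc m) j j) = (\<Sum>j=1..n-1. W n m (2*n+1-j) j + W n m (n+1) j)"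
      using assms by (intro sum.cong) (auto simp: fs)
    moreover have "W n (Suc m) n n = W n m n n + W n m (n+1) n" using assms by (subst fs) auto
    moreover have "W n (Suc m) (n+1) (n+1) = W n m 1 (n+1)" using assms by (subst fs) auto
    moreover have "(\<Sum>j=1..n-1. W n (Suc m) (2*n+1-j) (2*n+1-j)) = (\<Sum>j=1..n-1. W n m (j+1) (2*n+1-j))"
      using assms by (intro sum.cong) (auto simp: fs)
    ultimately show ?thesis by simp
  qed
  show ?thesis unfolding c_def b1 b2 b3 L G R sum.distrib by simp
qed

definition hh :: "nat \<Rightarrow> nat" where "hh i = (if i = 0 then 1 else 2^(i-1))"

lemma fH: "n > 1 \<Longrightarrow> W n (Suc t) (n+1) v = W n t 1 v" by (subst fs) auto
lemma fx: "n > 1 \<Longrightarrow> 1 \<le> j \<Longrightarrow> j \<le> n-1 \<Longrightarrow> W n (Suc t) j v = W n t (2*n+1-j) v + W n t (n+1) v"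
  by (subst fs) auto
lemma fN: "n > 1 \<Longrightarrow> W n (Suc t) n v = W n t n v + W n t (n+1) v" by (subst fs) auto
lemma fy: "n > 1 \<Longrightarrow> n+2 \<le> u \<Longrightarrow> u \<le> 2*n \<Longrightarrow> W n (Suc t) u v = W n t (2*n+2-u) v"
  by (subst fs) auto
lemma fx2: assumes "n > 1" "1 \<le> j" "j \<le> n-1" shows "W n (Suc (Suc t)) j v = W n t (j+1) v + W n (Suc t) (n+1) v"
proof -
  have "W n (Suc (Suc t)) j v = W n (Suc t) (2*n+1-j) v + W n (Suc t) (n+1) v" using fx assms by blast
  moreover have "W n (Suc t) (2*n+1-j) v = W n t (j+1) v" using assms by (subst fy) (auto simp: Suc_diff_le)
  ultimately show ?thesis by simp
qed

definition Qs :: "nat \<Rightarrow> nat \<Rightarrow> bool" where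
"Qs n s = ((s \<le> 2*n \<longrightarrow> W n (2*s) (n+1) (n+1) = hh s)
  \<and> (2*s+1 < 2*n \<longrightarrow> W n (2*s+1) (n+1) (n+1) = 0)
  \<and> (\<forall>j. 1 \<le> j \<and> j \<le> n \<and> 2*s+1+2*j \<le> 4*n+1 \<longrightarrow> W n (2*s+1) j (n+1) = 2^s)
  \<and> (\<forall>j. 1 \<le> j \<and> j \<le> n \<and> s + j \<le> n \<longrightarrow> W n (2*s) j (n+1) = 0)
  \<and> (1 \<le> s \<and> s \<le> n \<longrightarrow> W n (2*s) n (n+1) = 2^(s-1)))"

lemma Qs_all: assumes n: "n > 1" shows "Qs n s"
proof (induction s)
  case 0
  have a: "W n 0 (n+1) (n+1) = hh 0" by (simp add: hh_def)
  have b: "W n 1 (n+1) (n+1) = 0" using fH[OF n, of 0 "n+1"] n by simp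
  have c: "W n 1 j (n+1) = 1" if "1 \<le> j" "j \<le> n" for j
  proof (cases "j = n")
    case True then show ?thesis using fN[OF n, of 0 "n+1"] by simp
  next
    case False then show ?thesis using fx[OF n, of j 0 "n+1"] that n by simp
  qed
  have d: "W n 0 j (n+1) = 0" if "j \<le> n" for j using that by simp
  show ?case unfolding Qs_def using a b c d by auto
next
  case (Suc s)
  note IH = Suc[unfolded Qs_def]
  have h1: "W n (2*s+1) (n+1) (n+1) = 0" if "2*s+1 < 2*n" using IH that by blast
  have f3: "W n (2*s+1) j (n+1) = 2^s" if "1 \<le> j" "j \<le> n" "2*s+1+2*j \<le> 4*n+1" for j using IH that by blast
  have f4: "W n (2*s) j (n+1) = 0" if "1 \<le> j" "j \<le> n" "s + j \<le> n" for j using IH that by blast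
  have F4: "W n (2*Suc s) j (n+1) = 0" if "1 \<le> j" "j \<le> n" "Suc s + j \<le> n" for j
  proof -
    have "j \<le> n - 1" using that by simp
    then have "W n (2*Suc s) j (n+1) = W n (2*s) (j+1) (n+1) + W n (2*s+1) (n+1) (n+1)"
      using fx2[OF n, of j "2*s" "n+1"] that by simp
    then show ?thesis using f4[of "j+1"] h1 that by simp
  qed
  have F5: "W n (2*Suc s) n (n+1) = 2^s" if "Suc s \<le> n"
  proof -
    have "W n (2*Suc s) n (n+1) = W n (2*s+1) n (n+1) + W n (2*s+1) (n+1) (n+1)"
      using fN[OF n, of "2*s+1" "n+1"] by simp
    then show ?thesis using f3[of n] h1 that n by simp
  qed
  have F1: "W n (2*Suc s) (n+1) (n+1) = hh (Suc s)" if "Suc s \<le> 2*n"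
  proof -
    have "W n (2*Suc s) (n+1) (n+1) = W n (2*s+1) 1 (n+1)" using fH[OF n, of "2*s+1" "n+1"] by simp
    then show ?thesis using f3[of 1] that n by (simp add: hh_def)
  qed
  have F2: "W n (2*Suc s+1) (n+1) (n+1) = 0" if "2*Suc s+1 < 2*n"
  proof -
    have "W n (2*Suc s+1) (n+1) (n+1) = W n (2*Suc s) 1 (n+1)" using fH[OF n, of "2*Suc s" "n+1"] by simp
    then show ?thesis using F4[of 1] that n by simp
  qed
  have F3: "W n (2*Suc s+1) j (n+1) = 2^Suc s" if "1 \<le> j" "j \<le> n" "2*Suc s+1+2*j \<le> 4*n+1" for j
  proof (cases "j = n")
    case True
    have "W n (2*Suc s+1) n (n+1) = W n (2*Suc s) n (n+1) + W n (2*Suc s) (n+1) (n+1)"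
      using fN[OF n, of "2*Suc s" "n+1"] by simp
    then show ?thesis using F5 F1 True that by (simp add: hh_def)
  next
    case False
    then have "j \<le> n - 1" using that by simp
    then have "W n (2*Suc s+1) j (n+1) = W n (2*s+1) (j+1) (n+1) + W n (2*Suc s) (n+1) (n+1)"
      using fx2[OF n, of j "2*s+1" "n+1"] that by simp
    then show ?thesis using f3[of "j+1"] F1 that False by (simp add: hh_def)
  qed
  show ?case unfolding Qs_def using F1 F2 F3 F4 F5 by simp
qed

lemma hval_even: "n > 1 \<Longrightarrow> s \<le> 2*n \<Longrightarrow> W n (2*s) (n+1) (n+1) = hh s"
  using Qs_all[of n s] unfolding Qs_def by blast
lemma hval_odd: "n > 1 \<Longrightarrow> 2*s+1 < 2*n \<Longrightarrow> W n (2*s+1) (n+1) (n+1) = 0"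
  using Qs_all[of n s] unfolding Qs_def by blast

lemma Gxy: assumes n: "n > 1" shows "1 \<le> j \<Longrightarrow> j \<le> n - 1 \<Longrightarrow>
  (\<forall>t. W n t (n+1) j = (if 2*j-1 \<le> t then W n (t+1-2*j) (n+1) (n+1) else 0)) \<and>
  (\<forall>t. W n t (n+1) (2*n+1-j) = (if 2*j \<le> t then W n (t-2*j) (n+1) (n+1) else 0))"
proof (induction j)
  case 0 then show ?case by simp
next
  case (Suc j)
  have GX: "\<forall>t. W n t (n+1) (Suc j) = (if 2*Suc j-1 \<le> t then W n (t+1-2*Suc j) (n+1) (n+1) else 0)"
  proof
    fix t show "W n t (n+1) (Suc j) = (if 2*Suc j-1 \<le> t then W n (t+1-2*Suc j) (n+1) (n+1) else 0)"
    proof (cases t)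
      case 0 then show ?thesis using Suc.prems by simp
    next
      case (Suc t')
      show ?thesis
      proof (cases "j = 0")
        case True
        then show ?thesis using ls_x1[OF n, of t' "n+1"] Suc by simp
      next
        case False
        then have IH: "\<forall>t. W n t (n+1) (2*n+1-j) = (if 2*j \<le> t then W n (t-2*j) (n+1) (n+1) else 0)"
          using Suc.IH Suc.prems by simp
        have "W n (Suc t') (n+1) (Suc j) = W n t' (n+1) (2*n+2-Suc j)"
          using ls_x[OF n, of "Suc j" t' "n+1"] False Suc.prems by simp
        also have "2*n+2-Suc j = 2*n+1-j" by simp
        finally show ?thesis using IH Suc by auto
      qed
    qed
  qed
  have GY: "\<forall>t. W n t (n+1) (2*n+1-Suc j) = (if 2*Suc j \<le> t then W n (t-2*Suc j) (n+1) (n+1) else 0)"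
  proof
    fix t show "W n t (n+1) (2*n+1-Suc j) = (if 2*Suc j \<le> t then W n (t-2*Suc j) (n+1) (n+1) else 0)"
    proof (cases t)
      case 0 then show ?thesis using Suc.prems by simp
    next
      case (Suc t')
      have "W n (Suc t') (n+1) (2*n+1-Suc j) = W n t' (n+1) (2*n+1-(2*n+1-Suc j))"
        using ls_y[OF n, of "2*n+1-Suc j" t' "n+1"] Suc.prems by simp
      also have "2*n+1-(2*n+1-Suc j) = Suc j" using Suc.prems by simp
      finally show ?thesis using GX Suc by auto
    qed
  qed
  show ?case using GX GY by blast
qed

lemma Gx: "n > 1 \<Longrightarrow> 1 \<le> j \<Longrightarrow> j \<le> n - 1 \<Longrightarrow> W n t (n+1) j = (if 2*j-1 \<le> t then W n (t+1-2*j) (n+1) (n+1) else 0)"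
  using Gxy by blast
lemma Gy: "n > 1 \<Longrightarrow> 1 \<le> j \<Longrightarrow> j \<le> n - 1 \<Longrightarrow> W n t (n+1) (2*n+1-j) = (if 2*j \<le> t then W n (t-2*j) (n+1) (n+1) else 0)"
  using Gxy by blast

lemma Gn2: assumes n: "n > 1" shows "W n t (n+1) (n+2) = (if 2*n-2 \<le> t then W n (t+2-2*n) (n+1) (n+1) else 0)"
proof -
  have "W n t (n+1) (2*n+1-(n-1)) = (if 2*(n-1) \<le> t then W n (t-2*(n-1)) (n+1) (n+1) else 0)"
    using Gy[OF n, of "n-1" t] n by simp
  moreover have "2*n+1-(n-1) = n+2" "2*(n-1) = 2*n-2" using n by auto
  moreover have "2*n-2 \<le> t \<Longrightarrow> t-2*(n-1) = t+2-2*n" using n by auto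
  ultimately show ?thesis by auto
qed

lemma Gn: assumes n: "n > 1" shows "t \<le> 4*n-1 \<Longrightarrow> W n t (n+1) n = (if 2*n-1 \<le> t then 2^((t+1-2*n) div 2) else 0)"
proof (induction t)
  case 0 then show ?case using n by simp
next
  case (Suc t)
  have rec: "W n (Suc t) (n+1) n = W n t (n+1) (n+2) + W n t (n+1) n" using ls_n[OF n] .
  show ?case
  proof (cases "t < 2*n-2")
    case True
    then show ?thesis using rec Gn2[OF n, of t] Suc by auto
  next
    case False
    show ?thesis
    proof (cases "t = 2*n-2")
      case True
      have e1: "t+2-2*n = 0" "\<not> 2*n-1 \<le> t" "2*n-2 \<le> t" using True n by auto
      have w1: "W n t (n+1) (n+2) = 1" using Gn2[OF n, of t] e1 by (simp add: hh_def)
      have w2: "W n t (n+1) n = 0" using Suc.IH Suc.prems e1 by simp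
      have e2: "2*n-1 \<le> Suc t" "(Suc t + 1 - 2*n) div 2 = 0" using True n by auto
      show ?thesis unfolding rec w1 w2 using e2 by simp
    next
      case F2: False
      define a where "a = t - (2*n-2)"
      have a: "t = 2*n-2+a" "a \<ge> 1" using False F2 unfolding a_def by auto
      have tge: "2*n-1 \<le> t" using a n by linarith
      have IH: "W n t (n+1) n = 2^((t+1-2*n) div 2)" using Suc.IH Suc.prems tge by simp
      have ta: "t+2-2*n = a" "2*n-2 \<le> t" using a n by linarith+
      have g: "W n t (n+1) (n+2) = W n a (n+1) (n+1)" using Gn2[OF n, of t] ta by simp
      have tge2: "2*n-1 \<le> Suc t" using tge by linarith
      have ale: "a \<le> 2*n" using Suc.prems a n by auto
      show ?thesis
      proof (cases "even a")
        case True
        then obtain q where q: "a = 2*q" by blast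
        have "W n a (n+1) (n+1) = hh q" using hval_even[OF n, of q] q ale by simp
        moreover have "q \<ge> 1" using q a by simp
        moreover have "(t+1-2*n) div 2 = q - 1" using q a n by simp
        moreover have "(Suc t+1-2*n) div 2 = q" using q a n by simp
        moreover have "(2::nat)^(q-1) + 2^(q-1) = 2^q" using \<open>q \<ge> 1\<close>
          by (cases q) auto
        ultimately show ?thesis using rec IH g tge2 by (simp add: hh_def)
      next
        case False
        then obtain q where q: "a = 2*q+1" by (metis oddE)
        have "2*q+1 < 2*n" using q ale by presburger
        then have "W n a (n+1) (n+1) = 0" using hval_odd[OF n, of q] q by simp
        moreover have "(t+1-2*n) div 2 = q" using q a n by simp
        moreover have "(Suc t+1-2*n) div 2 = q" using q a n by simp
        ultimately show ?thesis using rec IH g tge2 by simp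
      qed
    qed
  qed
qed

lemma Da: assumes n: "n > 1" and j: "1 \<le> j" "j \<le> n-1"
  shows "W n (Suc m) j j = W n (Suc m) (2*n+1-j) (2*n+1-j) + W n m (n+1) j"
proof -
  have "W n (Suc m) (2*n+1-j) (2*n+1-j) = W n m (2*n+1-j) (2*n+1-(2*n+1-j))"
    using ls_y[OF n, of "2*n+1-j" m "2*n+1-j"] j by simp
  also have "2*n+1-(2*n+1-j) = j" using j by simp
  finally show ?thesis using fx[OF n j, of m j] by simp
qed

lemma Db: assumes n: "n > 1" and j: "1 \<le> j" "j+1 \<le> n-1"
  shows "W n (Suc m) (2*n+1-j) (2*n+1-j) = W n (Suc m) (j+1) (j+1)"
proof -
  have "W n (Suc m) (2*n+1-j) (2*n+1-j) = W n m (2*n+2-(2*n+1-j)) (2*n+1-j)"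
    using fy[OF n, of "2*n+1-j" m "2*n+1-j"] j by simp
  also have "2*n+2-(2*n+1-j) = j+1" using j by simp
  also have "W n m (j+1) (2*n+1-j) = W n (Suc m) (j+1) (j+1)"
    using ls_x[OF n, of "j+1" m "j+1"] j by simp
  finally show ?thesis .
qed

lemma Dc: assumes n: "n > 1" shows "W n (Suc m) (n+2) (n+2) = W n m (n+1) n"
proof -
  have "W n (Suc m) (n+2) (n+2) = W n m n (n+2)" using fy[OF n, of "n+2" m "n+2"] n by simp
  moreover have "W n (Suc m) n n = W n m n (n+2) + W n m n n" using ls_n[OF n] .
  moreover have "W n (Suc m) n n = W n m n n + W n m (n+1) n" using fN[OF n] .
  ultimately show ?thesis by simp
qed

lemma Dn: assumes n: "n > 1" shows "k \<le> 2*n \<Longrightarrow> W n (2*k) n n + 1 = (if k < n then 2 else 3*2^(k-n))"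
proof (induction k)
  case 0 then show ?case using n by simp
next
  case (Suc k)
  have r: "W n (2*Suc k) n n = W n (2*k) n n + W n (2*k) (n+1) n + W n (2*k+1) (n+1) n"
    using fN[OF n, of "2*k+1" n] fN[OF n, of "2*k" n] by simp
  have g1: "W n (2*k) (n+1) n = (if n \<le> k then 2^(k-n) else 0)"
  proof -
    have "W n (2*k) (n+1) n = (if 2*n-1 \<le> 2*k then 2^((2*k+1-2*n) div 2) else 0)"
      using Gn[OF n, of "2*k"] Suc.prems n by simp
    moreover have "(2*n-1 \<le> 2*k) = (n \<le> k)" using n by auto
    moreover have "n \<le> k \<Longrightarrow> (2*k+1-2*n) div 2 = k-n" by simp
    ultimately show ?thesis by auto
  qed
  have g2: "W n (2*k+1) (n+1) n = (if n \<le> Suc k then 2^(Suc k-n) else 0)"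
  proof -
    have "W n (2*k+1) (n+1) n = (if 2*n-1 \<le> 2*k+1 then 2^((2*k+1+1-2*n) div 2) else 0)"
      using Gn[OF n, of "2*k+1"] Suc.prems n by simp
    moreover have "(2*n-1 \<le> 2*k+1) = (n \<le> Suc k)" using n by auto
    moreover have "n \<le> Suc k \<Longrightarrow> (2*k+1+1-2*n) div 2 = Suc k-n" by simp
    ultimately show ?thesis by auto
  qed
  have IH: "W n (2*k) n n + 1 = (if k < n then 2 else 3*2^(k-n))" using Suc by simp
  show ?case
  proof (cases "Suc k < n")
    case True then show ?thesis using r g1 g2 IH by simp
  next
    case False
    show ?thesis
    proof (cases "Suc k = n")
      case True then show ?thesis using r g1 g2 IH by simp
    next
      case F2: False
      then have kn: "n \<le> k" using False by simp
      then have "Suc k - n = Suc (k - n)" by simp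
      then show ?thesis using r g1 g2 IH kn by simp
    qed
  qed
qed

lemma comb: "(Y::nat) = (if j<k then 2^(k-j-1) else 0) \<Longrightarrow> Y + (if j \<le> k then hh(k-j) else 0) = (if j \<le> k then 2^(k-j) else 0)"
proof (cases "j < k")
  case True
  then have e: "k - j = Suc (k-j-1)" by simp
  assume "Y = (if j<k then 2^(k-j-1) else 0)"
  then show ?thesis using True by (subst e, subst e) (simp add: hh_def)
next
  case False
  assume "Y = (if j<k then 2^(k-j-1) else 0)"
  then show ?thesis using False by (cases "j = k") (auto simp: hh_def)
qed

lemma XY: assumes n: "n > 1" and k: "1 \<le> k" "k \<le> 2*n"
  shows "1 \<le> j \<Longrightarrow> j \<le> n-1 \<Longrightarrow>
   W n (2*k) (2*n+1-j) (2*n+1-j) = (if j<k then 2^(k-j-1) else 0) \<and> W n (2*k) j j = (if j \<le> k then 2^(k-j) else 0)"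
proof (induction "n-1-j" arbitrary: j)
  have sk: "2*k = Suc (2*k-1)" using k by simp
  have WH: "W n (2*k-1) (n+1) j = (if j \<le> k then hh (k-j) else 0)" if "1 \<le> j" "j \<le> n-1" for j
  proof -
    have "W n (2*k-1) (n+1) j = (if 2*j-1 \<le> 2*k-1 then W n (2*k-1+1-2*j) (n+1) (n+1) else 0)"
      using Gx[OF n that] .
    moreover have "(2*j-1 \<le> 2*k-1) = (j \<le> k)" using that k by auto
    moreover have "j \<le> k \<Longrightarrow> 2*k-1+1-2*j = 2*(k-j)" using k by auto
    moreover have "j \<le> k \<Longrightarrow> W n (2*(k-j)) (n+1) (n+1) = hh (k-j)" using hval_even[OF n] k by simp
    ultimately show ?thesis by auto
  qed
  have DA: "W n (2*k) j j = W n (2*k) (2*n+1-j) (2*n+1-j) + W n (2*k-1) (n+1) j" if "1 \<le> j" "j \<le> n-1" for j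
    using Da[OF n that, of "2*k-1"] sk by simp
  {
    case 0
    then have jn: "j = n-1" by simp
    have "W n (2*k) (2*n+1-j) (2*n+1-j) = W n (2*k) (n+2) (n+2)" using jn n by (simp add: numeral_2_eq_2)
    also have "\<dots> = W n (2*k-1) (n+1) n" using Dc[OF n, of "2*k-1"] sk by simp
    also have "\<dots> = (if n \<le> k then 2^(k-n) else 0)"
    proof -
      have "W n (2*k-1) (n+1) n = (if 2*n-1 \<le> 2*k-1 then 2^((2*k-1+1-2*n) div 2) else 0)"
        using Gn[OF n, of "2*k-1"] k by simp
      moreover have "(2*n-1 \<le> 2*k-1) = (n \<le> k)" using n k by auto
      moreover have "n \<le> k \<Longrightarrow> (2*k-1+1-2*n) div 2 = k-n" using k by simp
      ultimately show ?thesis by auto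
    qed
    also have "\<dots> = (if j<k then 2^(k-j-1) else 0)" using jn n by auto
    finally have Y: "W n (2*k) (2*n+1-j) (2*n+1-j) = (if j<k then 2^(k-j-1) else 0)" .
    show ?case using Y DA[OF 0(2,3)] WH[OF 0(2,3)] comb[OF Y] by simp
  next
    case (Suc d)
    then have IH: "W n (2*k) (j+1) (j+1) = (if j+1 \<le> k then 2^(k-(j+1)) else 0)"
      using Suc.hyps(1)[of "j+1"] by simp
    have "W n (2*k) (2*n+1-j) (2*n+1-j) = W n (2*k) (j+1) (j+1)"
      using Db[OF n, of j "2*k-1"] Suc sk by simp
    then have Y: "W n (2*k) (2*n+1-j) (2*n+1-j) = (if j<k then 2^(k-j-1) else 0)" using IH by auto
    show ?case using Y DA[OF Suc(3,4)] WH[OF Suc(3,4)] comb[OF Y] by simp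
  }
qed

definition term3 :: "nat \<Rightarrow> nat \<Rightarrow> nat" where
"term3 k j = (if j<k then 3*2^(k-j-1) else if j=k then 1 else 0)"

lemma geo: assumes "k \<ge> 1" shows "(m < k \<longrightarrow> (\<Sum>j=1..m. term3 k j) + 3*2^(k-m-1) = 3*2^(k-1)) \<and>
   (k \<le> m \<longrightarrow> (\<Sum>j=1..m. term3 k j) + 2 = 3*2^(k-1))"
proof (induction m)
  case 0 then show ?case using assms by simp
next
  case (Suc m)
  have s: "(\<Sum>j=1..Suc m. term3 k j) = (\<Sum>j=1..m. term3 k j) + term3 k (Suc m)" by (simp add: sum.cl_ivl_Suc)
  show ?case
  proof (cases "Suc m < k")
    case True
    then have e: "k - m - 1 = Suc (k - Suc m - 1)" by simp
    have IHs: "(\<Sum>j=1..m. term3 k j) + 3*2^(k-m-1) = 3*2^(k-1)" using Suc True by simp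
    have t: "term3 k (Suc m) = 3*2^(k-Suc m-1)" using True by (simp add: term3_def)
    have p: "(2::nat)^(k-m-1) = 2*2^(k-Suc m-1)" by (subst e) simp
    have "(\<Sum>j=1..Suc m. term3 k j) + 3*2^(k-Suc m-1) = 3*2^(k-1)" using s t p IHs by linarith
    then show ?thesis using True by simp
  next
    case False
    show ?thesis
    proof (cases "Suc m = k")
      case True
      have "(\<Sum>j=1..m. term3 k j) + 3*2^(k-m-1) = 3*2^(k-1)" using Suc True by simp
      then show ?thesis using True s by (simp add: term3_def)
    next
      case F2: False
      then show ?thesis using Suc False s by (simp add: term3_def)
    qed
  qed
qed

theorem mainTheorem5:
  fixes n k :: nat
  assumes "n > 1" and "1 \<le> k" and "k \<le> 2 * n"
  shows "c (2 * k) n = 2 ^ (k + 1) - 1"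
proof -
  have n: "n > 1" using assms by simp
  have sk: "2*k = Suc (2*k-1)" using assms by simp
  have "c (2*k) n = (\<Sum>u=1..2*n. W n (2*k) u u)" using c_W[OF n, of "2*k-1"] sk by simp
  also have "\<dots> = (\<Sum>j=1..n-1. W n (2*k) j j) + W n (2*k) n n + W n (2*k) (n+1) (n+1)
      + (\<Sum>j=1..n-1. W n (2*k) (2*n+1-j) (2*n+1-j))" by (rule split_sum[OF n])
  also have "(\<Sum>j=1..n-1. W n (2*k) j j) + W n (2*k) n n + W n (2*k) (n+1) (n+1)
      + (\<Sum>j=1..n-1. W n (2*k) (2*n+1-j) (2*n+1-j))
      = (\<Sum>j=1..n-1. W n (2*k) j j + W n (2*k) (2*n+1-j) (2*n+1-j)) + W n (2*k) n n + W n (2*k) (n+1) (n+1)"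
    by (simp add: sum.distrib)
  also have "(\<Sum>j=1..n-1. W n (2*k) j j + W n (2*k) (2*n+1-j) (2*n+1-j)) = (\<Sum>j=1..n-1. term3 k j)"
  proof (intro sum.cong refl)
    fix j assume "j \<in> {1..n-1}"
    then have j: "1 \<le> j" "j \<le> n-1" by auto
    show "W n (2*k) j j + W n (2*k) (2*n+1-j) (2*n+1-j) = term3 k j"
      using XY[OF n assms(2,3) j]
    proof -
      assume h: "W n (2*k) (2*n+1-j) (2*n+1-j) = (if j<k then 2^(k-j-1) else 0) \<and> W n (2*k) j j = (if j \<le> k then 2^(k-j) else 0)"
      show ?thesis
      proof (cases "j < k")
        case True
        then have e: "k - j = Suc (k-j-1)" by simp
        have p: "(2::nat)^(k-j) = 2*2^(k-j-1)" by (subst e) simp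
        show ?thesis using h True p by (simp add: term3_def)
      next
        case False then show ?thesis using h by (auto simp: term3_def)
      qed
    qed
  qed
  also have "W n (2*k) (n+1) (n+1) = 2^(k-1)" using hval_even[OF n, of k] assms by (simp add: hh_def)
  finally have C: "c (2*k) n = (\<Sum>j=1..n-1. term3 k j) + W n (2*k) n n + 2^(k-1)" .
  have D: "W n (2*k) n n + 1 = (if k < n then 2 else 3*2^(k-n))" using Dn[OF n assms(3)] .
  have G: "(n-1 < k \<longrightarrow> (\<Sum>j=1..n-1. term3 k j) + 3*2^(k-(n-1)-1) = 3*2^(k-1)) \<and>
   (k \<le> n-1 \<longrightarrow> (\<Sum>j=1..n-1. term3 k j) + 2 = 3*2^(k-1))" using geo[OF assms(2)] .
  have P: "(2::nat)^(k+1) = 4 * 2^(k-1)" using assms(2)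
    by (cases k) auto
  show ?thesis
  proof (cases "k < n")
    case True
    then show ?thesis using C D G P by auto
  next
    case False
    then have e: "k-(n-1)-1 = k-n" using n by simp
    have G1: "(\<Sum>j=1..n-1. term3 k j) + 3*2^(k-n) = 3*2^(k-1)" using G False e by simp
    have D1: "W n (2*k) n n + 1 = 3*2^(k-n)" using D False by simp
    show ?thesis using C P G1 D1 by linarith
  qed
qed

end
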